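(* In every run of the algorithm described in the context, for every correct process $p_i$ and every $j\in\{1,\dots,n\}$, the following hold at every time: (R1) if $w\_sync_i[i]=w\_sync_i[j]=x$, then $p_i$ has sent $x$ messages of type $\textsc{write}(-,-)$ to $p_j$; (R2) if $w\_sync_i[i]>w\_sync_i[j]=x$, then $p_i$ has sent $x+1$ messages of type $\textsc{write}(-,-)$ to $p_j$.
   Context: Model. There are $n$ asynchronous processes $p_1,\dots,p_n$, of which up to $t<n/2$ may crash; a process runs its algorithm correctly until it crashes, and a process that never crashes is correct. Each ordered pair of processes is linked by a reliable (no loss, corruption, duplication or creation), asynchronous, not necessarily FIFO channel. $p_w$ is the single writer, invoking writes sequentially; $v_0$ is the initial value. Messages: $\textsc{write}(b,v)$ with $b\in\{0,1\}$, which stands for the two types $\textsc{write0}(v)$ and $\textsc{write1}(v)$; $\textsc{read}()$; $\textsc{proceed}()$. Variables of $p_i$. These are: $history_i$ with $history_i[0]=v_0$; $w\_sync_i[1..n]$, initially all $0$; $r\_sync_i[1..n]$, initially all $0$. $\mathsf{write}(v)$ by $p_w$: $wsn\gets w\_sync_w[w]+1$; $w\_sync_w[w]\gets wsn$; $history_w[wsn]\gets v$. Send $\textsc{write}(wsn\bmod 2,v)$ to each $p_j$ with $w\_sync_w[j]=wsn-1$. Wait until at least $n-t$ indices $j$ have $w\_sync_w[j]=wsn$. Return. $\mathsf{read}()$ by $p_i$: $r\_sync_i[i]\gets r\_sync_i[i]+1$ and call the new value $rsn$. Send $\textsc{read}()$ to all $p_j$ with $j\ne i$. Wait until at least $n-t$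 indices $j$ have $r\_sync_i[j]=rsn$. Let $sn\gets w\_sync_i[i]$. Wait until at least $n-t$ indices $j$ have $w\_sync_i[j]\ge sn$. Return $history_i[sn]$. On receipt of $\textsc{write}(b,v)$ from $p_j$ at $p_i$: Wait until $b=(w\_sync_i[j]+1)\bmod 2$. Let $wsn\gets w\_sync_i[j]+1$. If $wsn=w\_sync_i[i]+1$, then set $w\_sync_i[i]\gets wsn$ and $history_i[wsn]\gets v$, and send $\textsc{write}(wsn\bmod 2,v)$ to each $p_\ell$ with $w\_sync_i[\ell]=wsn-1$. Else, if $wsn<w\_sync_i[i]$, send $\textsc{write}((wsn+1)\bmod 2,history_i[wsn+1])$ to $p_j$. Finally set $w\_sync_i[j]\gets wsn$. On receipt of $\textsc{read}()$ from $p_j$ at $p_i$: Let $sn\gets w\_sync_i[i]$; wait until $w\_sync_i[j]\ge sn$; send $\textsc{proceed}()$ to $p_j$. On receipt of $\textsc{proceed}()$ from $p_j$ at $p_i$: $r\_sync_i[j]\gets r\_sync_i[j]+1$. Message handlers run concurrently; a waiting handler does not block the reception of other messages. *)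

theory Defs
  imports Main "HOL-Library.Multiset"
begin

text \<open>Messages. The bit b of WRITE(b,v) is a natural number taken modulo 2.\<close>
datatype 'v msg = WriteMsg nat 'v | ReadMsg | ProceedMsg

fun is_write :: "'v msg \<Rightarrow> bool" where
  "is_write (WriteMsg b v) = True"
| "is_write _ = False"

text \<open>Handlers that have received their message and may be waiting.
  HWrite j b v: receipt of WRITE(b,v) from p_j (waiting on the parity of b).
  HRead j sn: receipt of READ() from p_j, with sn = w_sync_i[i] read on receipt.\<close>
datatype 'v handler = HWrite nat nat 'v | HRead nat nat

datatype opstate = Idle | WWait nat | RWait1 nat | RWait2 nat

record 'v pstate =
  history :: "nat \<Rightarrow> 'v"
  w_sync  :: "nat \<Rightarrow> nat"
  r_sync  :: "nat \<Rightarrow> nat"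
  opst    :: opstate
  pend    :: "'v handler multiset"

text \<open>Global configuration: local states, crashed processes, messages in transit
  (reliable, non-FIFO channels), and the (ghost) record of all messages ever sent,
  as triples (sender, receiver, message).\<close>
record 'v config =
  ls      :: "nat \<Rightarrow> 'v pstate"
  crashed :: "nat set"
  transit :: "(nat \<times> nat \<times> 'v msg) multiset"
  sent    :: "(nat \<times> nat \<times> 'v msg) multiset"

definition procs :: "nat \<Rightarrow> nat set" where
  "procs n = {1..n}"

definition send_to :: "nat \<Rightarrow> nat set \<Rightarrow> 'v msg \<Rightarrow> (nat \<times> nat \<times> 'v msg) multiset" where
  "send_to i S m = mset_set ((\<lambda>j. (i, j, m)) ` S)"

definition init_pstate :: "'v \<Rightarrow> 'v pstate" where
  "init_pstate v0 = \<lparr> history = (\<lambda>_. v0), w_sync = (\<lambda>_. 0), r_sync = (\<lambda>_. 0),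
                      opst = Idle, pend = {#} \<rparr>"

definition init_config :: "'v \<Rightarrow> 'v config" where
  "init_config v0 = \<lparr> ls = (\<lambda>_. init_pstate v0), crashed = {}, transit = {#}, sent = {#} \<rparr>"

definition upd :: "'v config \<Rightarrow> nat \<Rightarrow> 'v pstate \<Rightarrow> (nat \<times> nat \<times> 'v msg) multiset \<Rightarrow> 'v config" where
  "upd c i s M = c\<lparr> ls := (ls c)(i := s), transit := transit c + M, sent := sent c + M \<rparr>"

text \<open>One atomic step of the system; n processes p_1..p_n, at most t crashes, writer p_w.
  Each step is the atomic execution of a local action (an operation invocation,
  the resumption of an operation whose wait condition holds, a message reception,
  the body of a handler whose wait condition holds), or a crash.\<close>
inductive step :: "nat \<Rightarrow> nat \<Rightarrow> nat \<Rightarrow> 'v config \<Rightarrow> 'v config \<Rightarrow> bool"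
  for n t w where
  invoke_write:
  "\<lbrakk> i = w; i \<in> procs n; i \<notin> crashed c; s = ls c i; opst s = Idle;
     wsn = w_sync s i + 1; ws' = (w_sync s)(i := wsn) \<rbrakk> \<Longrightarrow>
   step n t w c (upd c i (s\<lparr> w_sync := ws', history := (history s)(wsn := v), opst := WWait wsn \<rparr>)
                  (send_to i {j \<in> procs n. ws' j = wsn - 1} (WriteMsg (wsn mod 2) v)))"
| return_write:
  "\<lbrakk> i \<in> procs n; i \<notin> crashed c; s = ls c i; opst s = WWait wsn;
     card {j \<in> procs n. w_sync s j = wsn} \<ge> n - t \<rbrakk> \<Longrightarrow>
   step n t w c (upd c i (s\<lparr> opst := Idle \<rparr>) {#})"
| invoke_read:
  "\<lbrakk> i \<in> procs n; i \<notin> crashed c; s = ls c i; opst s = Idle;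
     rsn = r_sync s i + 1 \<rbrakk> \<Longrightarrow>
   step n t w c (upd c i (s\<lparr> r_sync := (r_sync s)(i := rsn), opst := RWait1 rsn \<rparr>)
                  (send_to i {j \<in> procs n. j \<noteq> i} ReadMsg))"
| read_phase2:
  "\<lbrakk> i \<in> procs n; i \<notin> crashed c; s = ls c i; opst s = RWait1 rsn;
     card {j \<in> procs n. r_sync s j = rsn} \<ge> n - t \<rbrakk> \<Longrightarrow>
   step n t w c (upd c i (s\<lparr> opst := RWait2 (w_sync s i) \<rparr>) {#})"
| return_read:
  "\<lbrakk> i \<in> procs n; i \<notin> crashed c; s = ls c i; opst s = RWait2 sn;
     card {j \<in> procs n. w_sync s j \<ge> sn} \<ge> n - t \<rbrakk> \<Longrightarrow>
   step n t w c (upd c i (s\<lparr> opst := Idle \<rparr>) {#})"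
| recv_write:
  "\<lbrakk> i \<in> procs n; i \<notin> crashed c; s = ls c i; (j, i, WriteMsg b v) \<in># transit c \<rbrakk> \<Longrightarrow>
   step n t w c (c\<lparr> ls := (ls c)(i := s\<lparr> pend := pend s + {# HWrite j b v #} \<rparr>),
                    transit := transit c - {# (j, i, WriteMsg b v) #} \<rparr>)"
| recv_read:
  "\<lbrakk> i \<in> procs n; i \<notin> crashed c; s = ls c i; (j, i, ReadMsg) \<in># transit c \<rbrakk> \<Longrightarrow>
   step n t w c (c\<lparr> ls := (ls c)(i := s\<lparr> pend := pend s + {# HRead j (w_sync s i) #} \<rparr>),
                    transit := transit c - {# (j, i, ReadMsg) #} \<rparr>)"
| recv_proceed:
  "\<lbrakk> i \<in> procs n; i \<notin> crashed c; s = ls c i; (j, i, ProceedMsg) \<in># transit c \<rbrakk> \<Longrightarrow>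
   step n t w c (c\<lparr> ls := (ls c)(i := s\<lparr> r_sync := (r_sync s)(j := r_sync s j + 1) \<rparr>),
                    transit := transit c - {# (j, i, ProceedMsg) #} \<rparr>)"
| handle_write:
  "\<lbrakk> i \<in> procs n; i \<notin> crashed c; s = ls c i; HWrite j b v \<in># pend s;
     b = (w_sync s j + 1) mod 2; wsn = w_sync s j + 1;
     (s', M) = (if wsn = w_sync s i + 1 then
                  (let ws1 = (w_sync s)(i := wsn) in
                   (s\<lparr> w_sync := ws1, history := (history s)(wsn := v) \<rparr>,
                    send_to i {l \<in> procs n. ws1 l = wsn - 1} (WriteMsg (wsn mod 2) v)))
                else if wsn < w_sync s i then
                  (s, {# (i, j, WriteMsg ((wsn + 1) mod 2) (history s (wsn + 1))) #})
                else (s, {#})) \<rbrakk> \<Longrightarrow>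
   step n t w c (upd c i (s'\<lparr> w_sync := (w_sync s')(j := wsn),
                              pend := pend s - {# HWrite j b v #} \<rparr>) M)"
| handle_read:
  "\<lbrakk> i \<in> procs n; i \<notin> crashed c; s = ls c i; HRead j sn \<in># pend s;
     w_sync s j \<ge> sn \<rbrakk> \<Longrightarrow>
   step n t w c (upd c i (s\<lparr> pend := pend s - {# HRead j sn #} \<rparr>) {# (i, j, ProceedMsg) #})"
| crash:
  "\<lbrakk> i \<in> procs n; i \<notin> crashed c; card (insert i (crashed c)) \<le> t \<rbrakk> \<Longrightarrow>
   step n t w c (c\<lparr> crashed := insert i (crashed c) \<rparr>)"

definition is_run :: "nat \<Rightarrow> nat \<Rightarrow> nat \<Rightarrow> 'v \<Rightarrow> (nat \<Rightarrow> 'v config) \<Rightarrow> bool" where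
  "is_run n t w v0 \<rho> \<longleftrightarrow> \<rho> 0 = init_config v0 \<and>
     (\<forall>k. step n t w (\<rho> k) (\<rho> (Suc k)) \<or> \<rho> (Suc k) = \<rho> k)"

definition correct :: "(nat \<Rightarrow> 'v config) \<Rightarrow> nat \<Rightarrow> bool" where
  "correct \<rho> i \<longleftrightarrow> (\<forall>k. i \<notin> crashed (\<rho> k))"

definition writes_sent :: "'v config \<Rightarrow> nat \<Rightarrow> nat \<Rightarrow> nat" where
  "writes_sent c i j = size (filter_mset (\<lambda>(a, b, m). a = i \<and> b = j \<and> is_write m) (sent c))"

abbreviation wsync :: "'v config \<Rightarrow> nat \<Rightarrow> nat \<Rightarrow> nat" where
  "wsync c i j \<equiv> w_sync (ls c i) j"

end

theory Submission imports Defs begin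

definition P :: "nat \<Rightarrow> nat \<Rightarrow> (nat \<times> nat \<times> 'v msg) \<Rightarrow> bool" where
  "P i j = (\<lambda>(a, b, m). a = i \<and> b = j \<and> is_write m)"

lemma ws_upd: "writes_sent (Defs.upd c p s M) i j = writes_sent c i j + size (filter_mset (P i j) M)"
  by (simp add: writes_sent_def upd_def P_def)

lemma size_send_to: "finite S \<Longrightarrow> size (filter_mset (P i j) (send_to p S msg)) =
   (if p = i \<and> j \<in> S \<and> is_write msg then 1 else 0)"
proof -
  assume f: "finite S"
  have "filter_mset (P i j) (send_to p S msg) = mset_set ({x \<in> ((\<lambda>x. (p, x, msg)) ` S). P i j x})"
    unfolding send_to_def using f by simp
  moreover have "{x \<in> (\<lambda>x. (p, x, msg)) ` S. P i j x} = (if p = i \<and> j \<in> S \<and> is_write msg then {(p,j,msg)} else {})"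
    by (auto simp: P_def)
  ultimately show ?thesis by simp
qed

lemma ls_upd[simp]: "ls (Defs.upd c p s M) = (ls c)(p := s)" by (simp add: Defs.upd_def)
lemma fin_procs[simp]: "finite {x \<in> procs n. Q x}" by (simp add: procs_def)

lemma send_to_other[simp]: assumes "p \<noteq> i" shows "filter_mset (P i j) (send_to p S msg) = {#}"
proof (cases "finite S")
  case True
  have "{x \<in> (\<lambda>x. (p, x, msg)) ` S. P i j x} = {}" using assms by (auto simp: P_def)
  moreover have "filter_mset (P i j) (send_to p S msg) = mset_set {x \<in> (\<lambda>x. (p, x, msg)) ` S. P i j x}"
    using True by (simp add: send_to_def)
  ultimately show ?thesis by (metis mset_set.empty)
next
  case False
  have "infinite ((\<lambda>x. (p, x, msg)) ` S)"
    using False by (auto dest: finite_imageD simp: inj_on_def)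
  then show ?thesis by (simp add: send_to_def)
qed

lemma single_other[simp]: "p \<noteq> i \<Longrightarrow> filter_mset (P i j) {#(p,q,m)#} = {#}"
  by (simp add: P_def)

lemma ws_proceed[simp]: "writes_sent (Defs.upd c p x {#(q,l,ProceedMsg)#}) i j = writes_sent c i j"
  by (simp add: writes_sent_def upd_def)

lemma wsync_upd[simp]: "wsync (Defs.upd c p s M) p = w_sync s" by simp

lemma wsel[simp]: "w_sync (x\<lparr>w_sync := f, pend := p\<rparr>) = f" by simp

definition inv :: "nat \<Rightarrow> nat \<Rightarrow> 'v config \<Rightarrow> bool" where
  "inv i j c \<longleftrightarrow> wsync c i j \<le> wsync c i i \<and>
     writes_sent c i j = (if wsync c i i = wsync c i j then wsync c i j else wsync c i j + 1)"

lemma ws_eq: "writes_sent c i j = size (filter_mset (P i j) (sent c))"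
  by (simp add: writes_sent_def P_def)

lemma step_inv:
  assumes "step n t w c c'" "j \<in> procs n" "i \<noteq> j" "inv i j c"
  shows "inv i j c'"
  using assms
proof (induction rule: step.induct)
  case (invoke_write p c s wsn ws' v)
  then show ?case
    by (auto simp: inv_def ws_upd size_send_to)
next
  case (return_write p c s wsn)
  then show ?case by (auto simp: inv_def ws_upd)
next
  case (invoke_read p c s rsn)
  then show ?case by (auto simp: inv_def ws_upd size_send_to)
next
  case (read_phase2 p c s rsn)
  then show ?case by (auto simp: inv_def ws_upd)
next
  case (return_read p c s sn)
  then show ?case by (auto simp: inv_def ws_upd)
next
  case (recv_write p c s l b v)
  then show ?case by (auto simp: inv_def writes_sent_def)
next
  case (recv_read p c s l)
  then show ?case by (auto simp: inv_def writes_sent_def)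
next
  case (recv_proceed p c s l)
  then show ?case by (auto simp: inv_def writes_sent_def)
next
  case (handle_write p c s l b v wsn s' M)
  show ?case
  proof (cases "p = i")
    case False
    have "M = {#} \<or> (\<exists>S m. M = send_to p S m) \<or> (\<exists>q m. M = {#(p,q,m)#})"
      using handle_write(7) by (auto simp: Let_def split: if_splits)
    then have "filter_mset (P i j) M = {#}"
      using False by (elim disjE exE; simp only: send_to_other single_other filter_empty_mset)
    then have "size (filter_mset (P i j) M) = 0" by simp
    then show ?thesis using handle_write False by (auto simp: inv_def ws_upd)
  next
    case True
    note h = handle_write
    have inv0: "w_sync s j \<le> w_sync s i" "writes_sent c i j = (if w_sync s i = w_sync s j then w_sync s j else w_sync s j + 1)"
      using h True by (auto simp: inv_def)
    have wj: "w_sync s l + 1 = wsn" using h by simp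
    have c'ws: "wsync (Defs.upd c i (s'\<lparr>w_sync := (w_sync s')(l := wsn), pend := pend s - {#HWrite l b v#}\<rparr>) M) i
        = (w_sync s')(l := wsn)" by (simp add: fun_upd_def)
    consider (B1) "wsn = w_sync s i + 1" | (B2) "wsn \<noteq> w_sync s i + 1" "wsn < w_sync s i"
      | (B3) "wsn \<noteq> w_sync s i + 1" "\<not> wsn < w_sync s i" by blast
    then show ?thesis
    proof cases
      case B1
      then have e1: "w_sync s' = (w_sync s)(i := wsn)"
        and e2: "M = send_to i {x \<in> procs n. ((w_sync s)(i := wsn)) x = wsn - 1} (WriteMsg (wsn mod 2) v)"
        using h(7) True by (simp_all add: Let_def)
      have sz: "size (filter_mset (P i j) M) = (if w_sync s j = w_sync s i then 1 else 0)"
        unfolding e2 using assms(2,3) B1 by (simp add: size_send_to)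
      show ?thesis unfolding inv_def True ws_upd wsync_upd sz e1 using inv0 B1 wj assms(3)
        apply (simp only: wsel) by (cases "l = j"; cases "l = i"; simp)
    next
      case B2
      then have e1: "s' = s"
        and e2: "M = {#(i, l, WriteMsg ((wsn + 1) mod 2) (history s (wsn + 1)))#}"
        using h(7) True by (simp_all add: Let_def)
      have sz: "size (filter_mset (P i j) M) = (if l = j then 1 else 0)"
        unfolding e2 by (simp add: P_def)
      show ?thesis unfolding inv_def True ws_upd wsync_upd sz e1 using inv0 B2 wj assms(3)
        apply (simp only: wsel) by (cases "l = j"; cases "l = i"; simp)
    next
      case B3
      then have e1: "s' = s" and e2: "M = {#}"
        using h(7) True by (simp_all add: Let_def)
      show ?thesis unfolding inv_def True ws_upd wsync_upd e1 e2 using inv0 B3 wj assms(3)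
        apply (simp only: wsel) by (cases "l = j"; cases "l = i"; simp)
    qed
  qed
next
  case (handle_read p c s l sn)
  then show ?case by (auto simp: inv_def)
next
  case (crash p c)
  then show ?case by (auto simp: inv_def writes_sent_def)
qed

lemma inv_init: "inv i j (init_config v0)"
  by (simp add: inv_def init_config_def init_pstate_def writes_sent_def)

theorem lemma5:
  fixes n t w :: nat and v0 :: 'v and \<rho> :: "nat \<Rightarrow> 'v config"
  assumes "w \<in> procs n"
    and "2 * t < n"
    and "is_run n t w v0 \<rho>"
    and "i \<in> procs n" and "correct \<rho> i"
    and "j \<in> procs n" and "j \<noteq> i"
  shows "\<forall>k x.
     (wsync (\<rho> k) i i = x \<and> wsync (\<rho> k) i j = x \<longrightarrow> writes_sent (\<rho> k) i j = x) \<and>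
     (wsync (\<rho> k) i i > x \<and> wsync (\<rho> k) i j = x \<longrightarrow> writes_sent (\<rho> k) i j = x + 1)"
proof (intro allI)
  fix k x
  have I: "inv i j (\<rho> k)"
  proof (induction k)
    case 0
    then show ?case using assms(3) inv_init by (simp add: is_run_def)
  next
    case (Suc k)
    from assms(3) have "step n t w (\<rho> k) (\<rho> (Suc k)) \<or> \<rho> (Suc k) = \<rho> k"
      by (simp add: is_run_def)
    then show ?case
    proof
      assume st: "step n t w (\<rho> k) (\<rho> (Suc k))"
      have ij: "i \<noteq> j" using assms(7) by simp
      show ?thesis by (rule step_inv[OF st assms(6) ij Suc.IH])
    next
      assume "\<rho> (Suc k) = \<rho> k"
      then show ?thesis using Suc by simp
    qed
  qed
  then show "(wsync (\<rho> k) i i = x \<and> wsync (\<rho> k) i j = x \<longrightarrow> writes_sent (\<rho> k) i j = x) \<and>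
     (wsync (\<rho> k) i i > x \<and> wsync (\<rho> k) i j = x \<longrightarrow> writes_sent (\<rho> k) i j = x + 1)"
    unfolding inv_def by auto
qed

end
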